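(* Let $m,n\ge1$ and let $\mathcal{C}$ be a $\beta$-avoiding simplicial complex that has an induced subcomplex isomorphic to $D_{m,n}$. Then the subcomplex of $\mathcal{C}$ induced on its non-ghost vertices is isomorphic to $\operatorname{cone}^p(D_{m,n})$ for some $p\ge0$.
   Context: A simplicial complex on a finite ground set $V$ is a family of subsets of $V$ closed under subsets; a vertex $v$ is a ghost vertex if $\{v\}\notin\mathcal{C}$, otherwise non-ghost. Induced subcomplex on $W\subseteq V$: $\{F\in\mathcal{C}:F\subseteq W\}$ on $W$. Alexander dual of $\mathcal{D}$ on $V$: $\mathcal{D}^*=\{S\subseteq V: V\setminus S\notin\mathcal{D}\}$. $\Delta_k$ is the complex on a $(k+1)$-set with that set as sole facet, $\sqcup$ is disjoint union, and $D_{m,n}=(\Delta_m\sqcup\Delta_n)^*$; equivalently, on ground set $M\sqcup N$ with $|M|=m+1$, $|N|=n+1$, its facets are the sets omitting exactly one element of $M$ and one of $N$. $\operatorname{cone}^p(\mathcal{D})$ adds $p$ new vertices $u_1,\dots,u_p$ with facets $F\cup\{u_1,\dots,u_p\}$ ($\operatorname{cone}^0(\mathcal{D})=\mathcal{D}$). For $S\subseteq V$, $\mathcal{C}\setminus S$ is the induced subcomplex on $V\setminus S$; for a face $R$, $\operatorname{link}_R(\mathcal{C})=\{F\setminus R: R\subseteq F\in\mathcal{C}\}$ on $V\setminus R$. A minor is $\operatorname{link}_R(\mathcal{C}\setminus S)$ with $S\cap R=\emptyset$, $R$ a face. $\mathcal{C}$ is $\beta$-avoiding if no minor is isomorphic to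 any of: $P_4$ (on $\{1,2,3,4\}$, facets $12,23,34$); $O_6$ (on $\{1,\dots,6\}$, faces the subsets containing none of $\{1,2\},\{3,4\},\{5,6\}$) or $O_6^*$; $J_1$ (on $\{1,\dots,5\}$, facets $12,15,234,345$) or $J_1^*$ (facets $134,235,245$); $J_2$ (on $\{1,\dots,5\}$, facets $12,235,34,145$); $\partial\Delta_k\sqcup\{v\}$ for $k\ge1$ (all proper subsets of a $(k+1)$-set together with one extra isolated vertex). *)

theory Defs
  imports Main
begin

text \<open>A simplicial complex is represented as a pair (V, C): a finite ground set V
  and a family C of subsets of V closed under taking subsets.  Ghost vertices
  are elements v of V with {v} not in C.\<close>

type_synonym 'a complex = "'a set \<times> 'a set set"

definition simplicial_complex :: "'a complex \<Rightarrow> bool" where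
  "simplicial_complex K \<longleftrightarrow> finite (fst K) \<and> (\<forall>F\<in>snd K. F \<subseteq> fst K)
     \<and> (\<forall>F\<in>snd K. \<forall>G. G \<subseteq> F \<longrightarrow> G \<in> snd K)"

definition non_ghost :: "'a complex \<Rightarrow> 'a set" where
  "non_ghost K = {v \<in> fst K. {v} \<in> snd K}"

definition induced :: "'a complex \<Rightarrow> 'a set \<Rightarrow> 'a complex" where
  "induced K W = (W, {F \<in> snd K. F \<subseteq> W})"

definition deletion :: "'a complex \<Rightarrow> 'a set \<Rightarrow> 'a complex" where
  "deletion K S = induced K (fst K - S)"

definition link :: "'a complex \<Rightarrow> 'a set \<Rightarrow> 'a complex" where
  "link K R = (fst K - R, {F - R | F. F \<in> snd K \<and> R \<subseteq> F})"

definition alexander_dual :: "'a complex \<Rightarrow> 'a complex" where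
  "alexander_dual K = (fst K, {S. S \<subseteq> fst K \<and> fst K - S \<notin> snd K})"

definition iso :: "'a complex \<Rightarrow> 'b complex \<Rightarrow> bool" where
  "iso K L \<longleftrightarrow> (\<exists>f. bij_betw f (fst K) (fst L) \<and>
     (\<forall>F. F \<subseteq> fst K \<longrightarrow> (F \<in> snd K \<longleftrightarrow> f ` F \<in> snd L)))"

definition gen :: "'a set \<Rightarrow> 'a set set \<Rightarrow> 'a complex" where
  "gen V Fs = (V, {G. \<exists>F\<in>Fs. G \<subseteq> F})"

definition simplex :: "nat \<Rightarrow> nat complex" where
  "simplex k = ({0..k}, Pow {0..k})"

definition disj_union :: "'a complex \<Rightarrow> 'b complex \<Rightarrow> ('a + 'b) complex" where
  "disj_union K L = (Inl ` fst K \<union> Inr ` fst L,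
     {Inl ` F | F. F \<in> snd K} \<union> {Inr ` G | G. G \<in> snd L})"

definition D :: "nat \<Rightarrow> nat \<Rightarrow> (nat + nat) complex" where
  "D m n = alexander_dual (disj_union (simplex m) (simplex n))"

definition cone :: "nat \<Rightarrow> 'a complex \<Rightarrow> ('a + nat) complex" where
  "cone p K = (Inl ` fst K \<union> Inr ` {0..<p},
     {Inl ` F \<union> Inr ` U | F U. F \<in> snd K \<and> U \<subseteq> {0..<p}})"

definition P4 :: "nat complex" where
  "P4 = gen {1,2,3,4} {{1,2},{2,3},{3,4}}"

definition O6 :: "nat complex" where
  "O6 = ({1..6}, {F. F \<subseteq> {1..6} \<and> \<not> {1,2} \<subseteq> F \<and> \<not> {3,4} \<subseteq> F \<and> \<not> {5,6} \<subseteq> F})"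

definition J1 :: "nat complex" where
  "J1 = gen {1..5} {{1,2},{1,5},{2,3,4},{3,4,5}}"

definition J2 :: "nat complex" where
  "J2 = gen {1..5} {{1,2},{2,3,5},{3,4},{1,4,5}}"

definition bdry_plus_point :: "nat \<Rightarrow> nat complex" where
  "bdry_plus_point k = ({0..Suc k}, {F. F \<subset> {0..k}} \<union> {{Suc k}})"

definition beta_avoiding :: "'a complex \<Rightarrow> bool" where
  "beta_avoiding K \<longleftrightarrow> (\<forall>S R. S \<subseteq> fst K \<and> R \<subseteq> fst K \<and> S \<inter> R = {} \<and>
       R \<in> snd (deletion K S) \<longrightarrow>
       (let M = link (deletion K S) R in
         \<not> iso M P4 \<and> \<not> iso M O6 \<and> \<not> iso M (alexander_dual O6) \<and>
         \<not> iso M J1 \<and> \<not> iso M (alexander_dual J1) \<and> \<not> iso M J2 \<and>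
         (\<forall>k\<ge>1. \<not> iso M (bdry_plus_point k))))"

end

theory Submission
  imports Defs
begin

lemma comb4: "G \<subseteq> {p1,p2,p3,p4} \<Longrightarrow> \<not>{p1,p3} \<subseteq> G \<Longrightarrow> \<not>{p2,p4}\<subseteq>G \<Longrightarrow> \<not>{p1,p4}\<subseteq>G \<Longrightarrow> G \<subseteq> {p1,p2} \<or> G \<subseteq> {p2,p3} \<or> G \<subseteq> {p3,p4}"
  by (cases "p1 \<in> G"; cases "p2 \<in> G"; cases "p3 \<in> G"; cases "p4 \<in> G") blast+

lemma inj_sub: assumes inj: "inj_on f X" and "A \<subseteq> X" "B \<subseteq> X" shows "f ` A \<subseteq> f ` B \<longleftrightarrow> A \<subseteq> B"
proof
  assume h: "f ` A \<subseteq> f ` B"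
  show "A \<subseteq> B"
  proof
    fix x assume x: "x \<in> A"
    then have "f x \<in> f ` B" using h by blast
    then show "x \<in> B" using inj_on_image_mem_iff[OF inj] x assms by blast
  qed
qed blast

definition sel :: "bool \<Rightarrow> 'a \<Rightarrow> 'a set" where "sel b x = (if b then {x} else {})"
lemma sel_simps[simp]: "sel True x = {x}" "sel False x = {}" by (simp_all add: sel_def)
lemma decomp5: "G \<subseteq> {p1,p2,p3,p4,p5} \<Longrightarrow> G = sel (p1\<in>G) p1 \<union> sel (p2\<in>G) p2 \<union> sel (p3\<in>G) p3 \<union> sel (p4\<in>G) p4 \<union> sel (p5\<in>G) p5"
  unfolding sel_def by auto
lemma J1comb: "G \<subseteq> {p1,p2,p3,p4,p5} \<Longrightarrow> \<forall>Q\<in>{{p1,p3},{p1,p4},{p2,p5}}. \<not> Q \<subseteq> G \<Longrightarrow> \<exists>F\<in>{{p1,p2},{p1,p5},{p2,p3,p4},{p3,p4,p5}}. G \<subseteq> F"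
proof -
  assume G: "G \<subseteq> {p1,p2,p3,p4,p5}" and Q: "\<forall>Q\<in>{{p1,p3},{p1,p4},{p2,p5}}. \<not> Q \<subseteq> G"
  have *: "\<And>b1 b2 b3 b4 b5. \<not>(b1\<and>b3) \<Longrightarrow> \<not>(b1\<and>b4) \<Longrightarrow> \<not>(b2\<and>b5) \<Longrightarrow>
     \<exists>F\<in>{{p1,p2},{p1,p5},{p2,p3,p4},{p3,p4,p5}}. sel b1 p1 \<union> sel b2 p2 \<union> sel b3 p3 \<union> sel b4 p4 \<union> sel b5 p5 \<subseteq> F"
    subgoal for b1 b2 b3 b4 b5 by (cases b1; cases b2; cases b3; cases b4; cases b5) auto
    done
  have "\<not>(p1\<in>G \<and> p3\<in>G)" "\<not>(p1\<in>G \<and> p4\<in>G)" "\<not>(p2\<in>G \<and> p5\<in>G)" using Q by auto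
  from *[OF this] obtain F where "F \<in> {{p1,p2},{p1,p5},{p2,p3,p4},{p3,p4,p5}}"
    "sel (p1\<in>G) p1 \<union> sel (p2\<in>G) p2 \<union> sel (p3\<in>G) p3 \<union> sel (p4\<in>G) p4 \<union> sel (p5\<in>G) p5 \<subseteq> F" by blast
  then show ?thesis using decomp5[OF G] by (metis (no_types, lifting))
qed

lemma J2comb: "G \<subseteq> {p1,p2,p3,p4,p5} \<Longrightarrow> \<forall>Q\<in>{{p1,p3},{p2,p4},{p1,p2,p5},{p3,p4,p5}}. \<not> Q \<subseteq> G \<Longrightarrow> \<exists>F\<in>{{p1,p2},{p2,p3,p5},{p3,p4},{p1,p4,p5}}. G \<subseteq> F"
proof -
  assume G: "G \<subseteq> {p1,p2,p3,p4,p5}" and Q: "\<forall>Q\<in>{{p1,p3},{p2,p4},{p1,p2,p5},{p3,p4,p5}}. \<not> Q \<subseteq> G"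
  have *: "\<And>b1 b2 b3 b4 b5. \<not>(b1\<and>b3) \<Longrightarrow> \<not>(b2\<and>b4) \<Longrightarrow> \<not>(b1\<and>b2\<and>b5) \<Longrightarrow> \<not>(b3\<and>b4\<and>b5) \<Longrightarrow>
     \<exists>F\<in>{{p1,p2},{p2,p3,p5},{p3,p4},{p1,p4,p5}}. sel b1 p1 \<union> sel b2 p2 \<union> sel b3 p3 \<union> sel b4 p4 \<union> sel b5 p5 \<subseteq> F"
    subgoal for b1 b2 b3 b4 b5 by (cases b1; cases b2; cases b3; cases b4; cases b5) auto
    done
  have "\<not>(p1\<in>G \<and> p3\<in>G)" "\<not>(p2\<in>G \<and> p4\<in>G)" "\<not>(p1\<in>G \<and> p2\<in>G \<and> p5\<in>G)" "\<not>(p3\<in>G \<and> p4\<in>G \<and> p5\<in>G)" using Q by auto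
  from *[OF this] obtain F where "F \<in> {{p1,p2},{p2,p3,p5},{p3,p4},{p1,p4,p5}}"
    "sel (p1\<in>G) p1 \<union> sel (p2\<in>G) p2 \<union> sel (p3\<in>G) p3 \<union> sel (p4\<in>G) p4 \<union> sel (p5\<in>G) p5 \<subseteq> F" by blast
  then show ?thesis using decomp5[OF G] by (metis (no_types, lifting))
qed

lemma iso_gen:
  assumes bij: "bij_betw f X Y" and ch: "\<forall>G. G \<subseteq> X \<longrightarrow> (G \<in> A \<longleftrightarrow> (\<exists>F\<in>Fs. G \<subseteq> F))"
    and FX: "\<forall>F\<in>Fs. F \<subseteq> X"
  shows "iso (X, A) (gen Y ((`) f ` Fs))"
  unfolding iso_def gen_def fst_conv snd_conv
proof (intro exI[of _ f] conjI allI impI)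
  show "bij_betw f X Y" by fact
  fix F assume F: "F \<subseteq> X"
  have inj: "inj_on f X" using bij by (simp add: bij_betw_def)
  have "F \<in> A \<longleftrightarrow> (\<exists>F'\<in>Fs. F \<subseteq> F')" using ch F by blast
  also have "\<dots> \<longleftrightarrow> (\<exists>F'\<in>Fs. f ` F \<subseteq> f ` F')"
    by (rule bex_cong[OF refl]) (use inj_sub[OF inj F] FX in simp)
  also have "\<dots> \<longleftrightarrow> f ` F \<in> {G. \<exists>F\<in>(`) f ` Fs. G \<subseteq> F}" by simp
  finally show "F \<in> A \<longleftrightarrow> f ` F \<in> {G. \<exists>F\<in>(`) f ` Fs. G \<subseteq> F}" .
qed

locale bav =
  fixes V :: "'a set" and C :: "'a set set"
  assumes fin: "finite V" and sub: "\<forall>F\<in>C. F \<subseteq> V"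
    and dc: "\<forall>F\<in>C. \<forall>G. G \<subseteq> F \<longrightarrow> G \<in> C"
    and beta: "beta_avoiding (V, C)"
begin

lemma dcI: "F \<in> C \<Longrightarrow> G \<subseteq> F \<Longrightarrow> G \<in> C" using dc by blast

lemma forb:
  assumes R: "R \<in> C" and X: "X \<subseteq> V" "X \<inter> R = {}"
  defines "M \<equiv> (X, {G. G \<subseteq> X \<and> G \<union> R \<in> C})"
  shows "\<not> iso M P4 \<and> \<not> iso M O6 \<and> \<not> iso M J1 \<and> \<not> iso M J2
     \<and> (\<forall>k\<ge>1. \<not> iso M (bdry_plus_point k))"
proof -
  let ?S = "V - X - R"
  have RV: "R \<subseteq> V" using R sub by blast
  have eq: "link (deletion (V,C) ?S) R = M"
  proof -
    have e1: "V - ?S = X \<union> R" using X RV by blast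
    have "{F - R |F. F \<in> {F \<in> C. F \<subseteq> X \<union> R} \<and> R \<subseteq> F} = {G. G \<subseteq> X \<and> G \<union> R \<in> C}"
    proof (intro equalityI subsetI)
      fix G assume "G \<in> {F - R |F. F \<in> {F \<in> C. F \<subseteq> X \<union> R} \<and> R \<subseteq> F}"
      then obtain F where "G = F - R" "F \<in> C" "F \<subseteq> X \<union> R" "R \<subseteq> F" by blast
      moreover have "(F - R) \<union> R = F" using \<open>R \<subseteq> F\<close> by blast
      ultimately show "G \<in> {G. G \<subseteq> X \<and> G \<union> R \<in> C}" by auto
    next
      fix G assume "G \<in> {G. G \<subseteq> X \<and> G \<union> R \<in> C}"
      then have "G = (G \<union> R) - R" "G \<union> R \<in> C" "G \<union> R \<subseteq> X \<union> R" using X by auto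
      then show "G \<in> {F - R |F. F \<in> {F \<in> C. F \<subseteq> X \<union> R} \<and> R \<subseteq> F}" by blast
    qed
    then show ?thesis unfolding M_def link_def deletion_def induced_def using e1 X by auto
  qed
  have "R \<in> snd (deletion (V,C) ?S)" using R RV unfolding deletion_def induced_def by auto
  moreover have "?S \<subseteq> fst (V,C)" "R \<subseteq> fst (V,C)" "?S \<inter> R = {}" using RV by auto
  ultimately have "(\<lambda>M. \<not> iso M P4 \<and> \<not> iso M O6 \<and> \<not> iso M (alexander_dual O6) \<and>
         \<not> iso M J1 \<and> \<not> iso M (alexander_dual J1) \<and> \<not> iso M J2 \<and>
         (\<forall>k\<ge>1. \<not> iso M (bdry_plus_point k))) (link (deletion (V,C) ?S) R)"
    using beta[unfolded beta_avoiding_def Let_def, rule_format, of ?S R] by blast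
  then show ?thesis unfolding eq by blast
qed


lemma faces_char:
  assumes "\<forall>F\<in>Fs. F \<union> R \<in> C" "\<forall>Q\<in>Ns. Q \<union> R \<notin> C"
    "\<forall>G. G \<subseteq> X \<longrightarrow> (\<forall>Q\<in>Ns. \<not> Q \<subseteq> G) \<longrightarrow> (\<exists>F\<in>Fs. G \<subseteq> F)"
  shows "\<forall>G. G \<subseteq> X \<longrightarrow> (G \<union> R \<in> C \<longleftrightarrow> (\<exists>F\<in>Fs. G \<subseteq> F))"
proof (intro allI impI iffI)
  fix G assume G: "G \<subseteq> X" "G \<union> R \<in> C"
  have "\<forall>Q\<in>Ns. \<not> Q \<subseteq> G"
  proof (intro ballI notI)
    fix Q assume "Q \<in> Ns" "Q \<subseteq> G"
    then have "Q \<union> R \<in> C" using dcI[OF G(2)] by blast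
    with assms(2) \<open>Q \<in> Ns\<close> show False by blast
  qed
  then show "\<exists>F\<in>Fs. G \<subseteq> F" using assms(3) G by blast
next
  fix G assume "\<exists>F\<in>Fs. G \<subseteq> F"
  then obtain F where "F \<in> Fs" "G \<subseteq> F" by blast
  then show "G \<union> R \<in> C" using assms(1) dcI by blast
qed

lemma gen_forb:
  assumes R: "R \<in> C" and XV: "X \<subseteq> V" and XR: "X \<inter> R = {}" and bij: "bij_betw f X Y"
    and FX: "\<forall>F\<in>Fs. F \<subseteq> X" and fs: "\<forall>F\<in>Fs. F \<union> R \<in> C" and ns: "\<forall>Q\<in>Ns. Q \<union> R \<notin> C"
    and comb: "\<forall>G. G \<subseteq> X \<longrightarrow> (\<forall>Q\<in>Ns. \<not> Q \<subseteq> G) \<longrightarrow> (\<exists>F\<in>Fs. G \<subseteq> F)"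
    and T: "gen Y ((`) f ` Fs) = T" "T = P4 \<or> T = J1 \<or> T = J2"
  shows False
proof -
  have ch: "\<forall>G. G \<subseteq> X \<longrightarrow> (G \<union> R \<in> C \<longleftrightarrow> (\<exists>F\<in>Fs. G \<subseteq> F))"
    by (rule faces_char[OF fs ns comb])
  have "iso (X, {G. G \<subseteq> X \<and> G \<union> R \<in> C}) (gen Y ((`) f ` Fs))"
    by (rule iso_gen[OF bij]) (use ch FX in simp_all)
  then have "iso (X, {G. G \<subseteq> X \<and> G \<union> R \<in> C}) T" using T(1) by simp
  with forb[OF R XV XR] T(2) show False by blast
qed

lemma P4_forb:
  assumes R: "R \<in> C" and d: "distinct [p1,p2,p3,p4]" and XV: "{p1,p2,p3,p4} \<subseteq> V"
    and XR: "{p1,p2,p3,p4} \<inter> R = {}"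
    and f1: "{p1,p2} \<union> R \<in> C" "{p2,p3} \<union> R \<in> C" "{p3,p4} \<union> R \<in> C"
    and n1: "{p1,p3} \<union> R \<notin> C" "{p2,p4} \<union> R \<notin> C" "{p1,p4} \<union> R \<notin> C"
  shows False
proof -
  define f where "f x = (if x = p1 then 1 else if x = p2 then 2 else if x = p3 then 3 else (4::nat))" for x
  have fv: "f p1 = 1" "f p2 = 2" "f p3 = 3" "f p4 = 4" using d by (auto simp: f_def)
  have bij: "bij_betw f {p1,p2,p3,p4} {1,2,3,4}" using d unfolding bij_betw_def inj_on_def by (auto simp: fv)
  show False
  proof (rule gen_forb[OF R XV XR bij, of "{{p1,p2},{p2,p3},{p3,p4}}" "{{p1,p3},{p2,p4},{p1,p4}}"])
    show "\<forall>G. G \<subseteq> {p1,p2,p3,p4} \<longrightarrow> (\<forall>Q\<in>{{p1,p3},{p2,p4},{p1,p4}}. \<not> Q \<subseteq> G) \<longrightarrow>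
      (\<exists>F\<in>{{p1,p2},{p2,p3},{p3,p4}}. G \<subseteq> F)"
      using comb4[of _ p1 p2 p3 p4] by simp
    show "gen {1,2,3,4} ((`) f ` {{p1,p2},{p2,p3},{p3,p4}}) = P4" unfolding P4_def by (simp add: fv)
  qed (use f1 n1 in auto)
qed


lemma J1_forb:
  assumes R: "R \<in> C" and d: "distinct [p1,p2,p3,p4,p5]" and XV: "{p1,p2,p3,p4,p5} \<subseteq> V"
    and XR: "{p1,p2,p3,p4,p5} \<inter> R = {}"
    and f1: "{p1,p2} \<union> R \<in> C" "{p1,p5} \<union> R \<in> C" "{p2,p3,p4} \<union> R \<in> C" "{p3,p4,p5} \<union> R \<in> C"
    and n1: "{p1,p3} \<union> R \<notin> C" "{p1,p4} \<union> R \<notin> C" "{p2,p5} \<union> R \<notin> C"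
  shows False
proof -
  define f where "f x = (if x = p1 then 1 else if x = p2 then 2 else if x = p3 then 3 else if x = p4 then 4 else (5::nat))" for x
  have fv: "f p1 = 1" "f p2 = 2" "f p3 = 3" "f p4 = 4" "f p5 = 5" using d by (auto simp: f_def)
  have bij: "bij_betw f {p1,p2,p3,p4,p5} {1,2,3,4,5}" using d unfolding bij_betw_def inj_on_def by (auto simp: fv)
  show False
  proof (rule gen_forb[OF R XV XR bij, of "{{p1,p2},{p1,p5},{p2,p3,p4},{p3,p4,p5}}" "{{p1,p3},{p1,p4},{p2,p5}}"])
    show "\<forall>G. G \<subseteq> {p1,p2,p3,p4,p5} \<longrightarrow> (\<forall>Q\<in>{{p1,p3},{p1,p4},{p2,p5}}. \<not> Q \<subseteq> G) \<longrightarrow>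
      (\<exists>F\<in>{{p1,p2},{p1,p5},{p2,p3,p4},{p3,p4,p5}}. G \<subseteq> F)"
    proof (intro allI impI)
      fix G assume "G \<subseteq> {p1,p2,p3,p4,p5}" "\<forall>Q\<in>{{p1,p3},{p1,p4},{p2,p5}}. \<not> Q \<subseteq> G"
      then show "\<exists>F\<in>{{p1,p2},{p1,p5},{p2,p3,p4},{p3,p4,p5}}. G \<subseteq> F"
        by (rule J1comb)
    qed
    have e: "{1..5::nat} = {1,2,3,4,5}" by auto
    show "gen {1,2,3,4,5} ((`) f ` {{p1,p2},{p1,p5},{p2,p3,p4},{p3,p4,p5}}) = J1" unfolding J1_def e by (simp add: fv)
  qed (use f1 n1 in auto)
qed

lemma J2_forb:
  assumes R: "R \<in> C" and d: "distinct [p1,p2,p3,p4,p5]" and XV: "{p1,p2,p3,p4,p5} \<subseteq> V"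
    and XR: "{p1,p2,p3,p4,p5} \<inter> R = {}"
    and f1: "{p1,p2} \<union> R \<in> C" "{p2,p3,p5} \<union> R \<in> C" "{p3,p4} \<union> R \<in> C" "{p1,p4,p5} \<union> R \<in> C"
    and n1: "{p1,p3} \<union> R \<notin> C" "{p2,p4} \<union> R \<notin> C" "{p1,p2,p5} \<union> R \<notin> C" "{p3,p4,p5} \<union> R \<notin> C"
  shows False
proof -
  define f where "f x = (if x = p1 then 1 else if x = p2 then 2 else if x = p3 then 3 else if x = p4 then 4 else (5::nat))" for x
  have fv: "f p1 = 1" "f p2 = 2" "f p3 = 3" "f p4 = 4" "f p5 = 5" using d by (auto simp: f_def)
  have bij: "bij_betw f {p1,p2,p3,p4,p5} {1,2,3,4,5}" using d unfolding bij_betw_def inj_on_def by (auto simp: fv)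
  show False
  proof (rule gen_forb[OF R XV XR bij, of "{{p1,p2},{p2,p3,p5},{p3,p4},{p1,p4,p5}}" "{{p1,p3},{p2,p4},{p1,p2,p5},{p3,p4,p5}}"])
    show "\<forall>G. G \<subseteq> {p1,p2,p3,p4,p5} \<longrightarrow> (\<forall>Q\<in>{{p1,p3},{p2,p4},{p1,p2,p5},{p3,p4,p5}}. \<not> Q \<subseteq> G) \<longrightarrow>
      (\<exists>F\<in>{{p1,p2},{p2,p3,p5},{p3,p4},{p1,p4,p5}}. G \<subseteq> F)"
    proof (intro allI impI)
      fix G assume "G \<subseteq> {p1,p2,p3,p4,p5}" "\<forall>Q\<in>{{p1,p3},{p2,p4},{p1,p2,p5},{p3,p4,p5}}. \<not> Q \<subseteq> G"
      then show "\<exists>F\<in>{{p1,p2},{p2,p3,p5},{p3,p4},{p1,p4,p5}}. G \<subseteq> F"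
        by (rule J2comb)
    qed
    have e: "{1..5::nat} = {1,2,3,4,5}" by auto
    show "gen {1,2,3,4,5} ((`) f ` {{p1,p2},{p2,p3,p5},{p3,p4},{p1,p4,p5}}) = J2" unfolding J2_def e by (simp add: fv)
  qed (use f1 n1 in auto)
qed

lemma O6_forb:
  assumes R: "R \<in> C" and d: "distinct [a1,a2,b1,b2,u,v]" and XV: "{a1,a2,b1,b2,u,v} \<subseteq> V"
    and XR: "{a1,a2,b1,b2,u,v} \<inter> R = {}"
    and ch: "\<forall>G. G \<subseteq> {a1,a2,b1,b2,u,v} \<longrightarrow>
       (G \<union> R \<in> C \<longleftrightarrow> \<not> {a1,a2} \<subseteq> G \<and> \<not> {b1,b2} \<subseteq> G \<and> \<not> {u,v} \<subseteq> G)"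
  shows False
proof -
  let ?X = "{a1,a2,b1,b2,u,v}"
  define f where "f x = (if x = a1 then 1 else if x = a2 then 2 else if x = b1 then 3 else if x = b2 then 4 else if x = u then 5 else (6::nat))" for x
  have fv: "f a1 = 1" "f a2 = 2" "f b1 = 3" "f b2 = 4" "f u = 5" "f v = 6" using d by (auto simp: f_def)
  have e: "{1..6::nat} = {1,2,3,4,5,6}" by auto
  define g where "g n = (if n = (1::nat) then a1 else if n = 2 then a2 else if n = 3 then b1 else if n = 4 then b2 else if n = 5 then u else v)" for n
  have inj: "inj_on f ?X" by (rule inj_on_inverseI[where g=g]) (auto simp: fv g_def)
  have bij: "bij_betw f ?X {1..6}" unfolding e bij_betw_def using inj by (simp add: fv)
  have "iso (?X, {G. G \<subseteq> ?X \<and> G \<union> R \<in> C}) O6"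
    unfolding iso_def O6_def fst_conv snd_conv
  proof (intro exI[of _ f] conjI allI impI)
    show "bij_betw f ?X {1..6}" by fact
    fix F assume F: "F \<subseteq> ?X"
    have i1: "{1,2} = f ` {a1,a2}" "{3,4} = f ` {b1,b2}" "{5,6} = f ` {u,v}" by (simp_all add: fv)
    have "f ` F \<subseteq> {1..6}" using bij F unfolding bij_betw_def by blast
    moreover have "{1,2} \<subseteq> f ` F \<longleftrightarrow> {a1,a2} \<subseteq> F" unfolding i1 by (rule inj_sub[OF inj]) (use F in auto)
    moreover have "{3,4} \<subseteq> f ` F \<longleftrightarrow> {b1,b2} \<subseteq> F" unfolding i1 by (rule inj_sub[OF inj]) (use F in auto)
    moreover have "{5,6} \<subseteq> f ` F \<longleftrightarrow> {u,v} \<subseteq> F" unfolding i1 by (rule inj_sub[OF inj]) (use F in auto)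
    moreover have "F \<union> R \<in> C \<longleftrightarrow> \<not> {a1,a2} \<subseteq> F \<and> \<not> {b1,b2} \<subseteq> F \<and> \<not> {u,v} \<subseteq> F"
      using ch F by blast
    ultimately show "F \<in> {G. G \<subseteq> ?X \<and> G \<union> R \<in> C} \<longleftrightarrow>
      f ` F \<in> {F. F \<subseteq> {1..6} \<and> \<not> {1, 2} \<subseteq> F \<and> \<not> {3, 4} \<subseteq> F \<and> \<not> {5, 6} \<subseteq> F}"
      unfolding mem_Collect_eq using F by blast
  qed
  with forb[OF R XV XR] show False by blast
qed

lemma bpp_forb:
  assumes R: "R \<in> C" and Z: "finite Z" "2 \<le> card Z" "Z \<subseteq> V" and v: "v \<in> V" "v \<notin> Z"
    and XR: "insert v Z \<inter> R = {}"
    and f1: "\<forall>z\<in>Z. (Z - {z}) \<union> R \<in> C" and n1: "Z \<union> R \<notin> C"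
    and vf: "insert v R \<in> C" and vn: "\<forall>z\<in>Z. insert z (insert v R) \<notin> C"
  shows False
proof -
  define k where "k = card Z - 1"
  have k: "k \<ge> 1" "card Z = Suc k" using Z unfolding k_def by auto
  obtain g where g: "bij_betw g Z {0..<card Z}" using ex_bij_betw_finite_nat[OF Z(1)] by blast
  have g': "bij_betw g Z {0..k}" using g k by (simp add: atLeastLessThanSuc_atLeastAtMost)
  define f where "f x = (if x = v then Suc k else g x)" for x
  have fZ: "bij_betw f Z {0..k}"
  proof -
    have "bij_betw f Z {0..k} = bij_betw g Z {0..k}" by (rule bij_betw_cong) (use v(2) in \<open>auto simp: f_def\<close>)
    then show ?thesis using g' by simp
  qed
  have fv: "f v = Suc k" unfolding f_def by simp
  have bij: "bij_betw f (insert v Z) {0..Suc k}"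
  proof -
    have "bij_betw f (Z \<union> {v}) ({0..k} \<union> {Suc k})"
      by (rule bij_betw_combine[OF fZ]) (auto simp: fv bij_betw_def)
    moreover have "Z \<union> {v} = insert v Z" "{0..k} \<union> {Suc k} = {0..Suc k}" by auto
    ultimately show ?thesis by simp
  qed
  have XV: "insert v Z \<subseteq> V" using Z v by blast
  have "iso (insert v Z, {G. G \<subseteq> insert v Z \<and> G \<union> R \<in> C}) (bdry_plus_point k)"
    unfolding iso_def bdry_plus_point_def fst_conv snd_conv
  proof (intro exI[of _ f] conjI allI impI)
    show "bij_betw f (insert v Z) {0..Suc k}" by fact
    fix F assume F: "F \<subseteq> insert v Z"
    have fZk: "\<forall>z\<in>Z. f z \<le> k" using fZ unfolding bij_betw_def by auto
    show "F \<in> {G. G \<subseteq> insert v Z \<and> G \<union> R \<in> C} \<longleftrightarrow> f ` F \<in> {F. F \<subset> {0..k}} \<union> {{Suc k}}"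
    proof (cases "v \<in> F")
      case True
      have l: "F \<union> R \<in> C \<longleftrightarrow> F = {v}"
      proof
        assume h: "F \<union> R \<in> C"
        show "F = {v}"
        proof (rule ccontr)
          assume "F \<noteq> {v}"
          then obtain z where "z \<in> F" "z \<noteq> v" using True by blast
          then have "z \<in> Z" "insert z (insert v R) \<subseteq> F \<union> R" using F True by auto
          then show False using vn dcI[OF h] by blast
        qed
      qed (use vf in simp)
      have r: "f ` F \<in> {F. F \<subset> {0..k}} \<union> {{Suc k}} \<longleftrightarrow> F = {v}"
      proof
        assume h: "f ` F \<in> {F. F \<subset> {0..k}} \<union> {{Suc k}}"
        have "Suc k \<in> f ` F" using True fv by force
        then have "f ` F = {Suc k}" using h by auto
        show "F = {v}"
        proof (rule ccontr)
          assume "F \<noteq> {v}"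
          then obtain z where "z \<in> F" "z \<noteq> v" using True by blast
          then have "z \<in> Z" "f z \<in> f ` F" using F by auto
          then have "f z = Suc k" using \<open>f ` F = {Suc k}\<close> by blast
          then show False using fZk \<open>z \<in> Z\<close> by fastforce
        qed
      qed (simp add: fv)
      show ?thesis using l r F by blast
    next
      case False
      then have FZ: "F \<subseteq> Z" using F by blast
      have injZ: "inj_on f Z" using fZ by (simp add: bij_betw_def)
      have l: "F \<union> R \<in> C \<longleftrightarrow> F \<noteq> Z"
      proof
        assume "F \<noteq> Z"
        then obtain z where z: "z \<in> Z" "z \<notin> F" using FZ by blast
        then have "F \<union> R \<subseteq> (Z - {z}) \<union> R" using FZ by blast
        then show "F \<union> R \<in> C" using f1 z dcI by blast
      qed (use n1 in blast)
      have r: "f ` F \<in> {F. F \<subset> {0..k}} \<union> {{Suc k}} \<longleftrightarrow> F \<noteq> Z"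
      proof -
        have "f ` F \<noteq> {Suc k}"
        proof
          assume h: "f ` F = {Suc k}"
          then have "Suc k \<in> f ` F" by simp
          then obtain z where z: "z \<in> F" "Suc k = f z" by (rule imageE)
          then have "z \<in> Z" using FZ by blast
          then have "f z \<le> k" using fZk by blast
          then show False using z(2) by simp
        qed
        moreover have "f ` F \<subseteq> {0..k}" using fZ FZ unfolding bij_betw_def by blast
        moreover have "f ` F \<noteq> {0..k} \<longleftrightarrow> F \<noteq> Z"
        proof
          have fZi: "f ` Z = {0..k}" using fZ by (simp add: bij_betw_def)
          assume h: "f ` F \<noteq> {0..k}"
          show "F \<noteq> Z"
          proof
            assume "F = Z" then show False using h fZi by simp
          qed
        next
          have fZi: "f ` Z = {0..k}" using fZ by (simp add: bij_betw_def)
          assume h: "F \<noteq> Z"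
          show "f ` F \<noteq> {0..k}"
          proof
            assume h2: "f ` F = {0..k}"
            have "f ` Z \<subseteq> f ` F" using h2 fZi by (simp only: subset_refl)
            then have "Z \<subseteq> F" using inj_sub[OF injZ subset_refl FZ] by simp
            then show False using h FZ by blast
          qed
        qed
        ultimately show ?thesis unfolding Un_iff mem_Collect_eq singleton_iff psubset_eq by blast
      qed
      show ?thesis using l r F by blast
    qed
  qed
  with forb[OF R XV] XR k(1) show False by blast
qed

lemma two_pts:
  assumes R: "R \<in> C" and d: "y1 \<noteq> y2" "v \<noteq> y1" "v \<noteq> y2" and V: "y1 \<in> V" "y2 \<in> V" "v \<in> V"
    and nR: "y1 \<notin> R" "y2 \<notin> R" "v \<notin> R"
    and f: "insert y1 R \<in> C" "insert y2 R \<in> C" "insert v R \<in> C" and n: "insert y1 (insert y2 R) \<notin> C"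
  shows "insert y1 (insert v R) \<in> C \<or> insert y2 (insert v R) \<in> C"
proof (rule ccontr)
  assume h: "\<not> (insert y1 (insert v R) \<in> C \<or> insert y2 (insert v R) \<in> C)"
  show False
  proof (rule bpp_forb[OF R, of "{y1,y2}" v])
    show "finite {y1,y2}" by simp
    show "2 \<le> card {y1,y2}" using d by simp
    show "{y1,y2} \<subseteq> V" "v \<in> V" "v \<notin> {y1,y2}" using V d by auto
    show "insert v {y1,y2} \<inter> R = {}" using nR by auto
    have e1: "{y1,y2} - {y1} = {y2}" "{y1,y2} - {y2} = {y1}" using d by auto
    show "\<forall>z\<in>{y1,y2}. ({y1,y2} - {z}) \<union> R \<in> C" using f e1 by auto
    show "{y1,y2} \<union> R \<notin> C" using n by simp
    show "insert v R \<in> C" by fact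
    show "\<forall>z\<in>{y1,y2}. insert z (insert v R) \<notin> C" using h by auto
  qed
qed

definition rel :: "'a set \<Rightarrow> 'a set \<Rightarrow> 'a set \<Rightarrow> bool" where
  "rel R M N \<longleftrightarrow> R \<in> C \<and> M \<inter> N = {} \<and> (M \<union> N) \<inter> R = {} \<and> M \<union> N \<subseteq> V \<and>
     (\<forall>G. G \<subseteq> M \<union> N \<longrightarrow> (G \<union> R \<in> C \<longleftrightarrow> \<not> M \<subseteq> G \<and> \<not> N \<subseteq> G))"

lemma rel_sym: "rel R M N \<Longrightarrow> rel R N M"
  unfolding rel_def by (simp add: Un_commute Int_commute conj_commute)

lemma relD: assumes "rel R M N"
  shows "R \<in> C" "M \<inter> N = {}" "(M \<union> N) \<inter> R = {}" "M \<union> N \<subseteq> V"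
    "G \<subseteq> M \<union> N \<Longrightarrow> G \<union> R \<in> C \<longleftrightarrow> \<not> M \<subseteq> G \<and> \<not> N \<subseteq> G"
  using assms unfolding rel_def by simp_all

lemma rel_link:
  assumes r: "rel R M N" and w: "w \<in> M" and c: "2 \<le> card M" and N: "N \<noteq> {}"
  shows "rel (insert w R) (M - {w}) N"
proof -
  have fin: "finite M" using c card.infinite by force
  have wN: "w \<notin> N" using relD(2)[OF r] w by blast
  obtain w' where w': "w' \<in> M" "w' \<noteq> w"
  proof -
    have "M - {w} \<noteq> {}"
    proof
      assume "M - {w} = {}"
      then have "M = {w}" using w by blast
      then show False using c by simp
    qed
    then show ?thesis using that by blast
  qed
  have "{w} \<union> R \<in> C" using relD(5)[OF r, of "{w}"] w w' wN N by auto
  then have R': "insert w R \<in> C" by simp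
  show ?thesis unfolding rel_def
  proof (intro conjI allI impI)
    show "insert w R \<in> C" by fact
    show "(M - {w}) \<inter> N = {}" using relD(2)[OF r] by blast
    show "(M - {w} \<union> N) \<inter> insert w R = {}" using relD(3)[OF r] wN by blast
    show "M - {w} \<union> N \<subseteq> V" using relD(4)[OF r] by blast
    fix G assume G: "G \<subseteq> M - {w} \<union> N"
    have G': "insert w G \<subseteq> M \<union> N" using G w by blast
    have "G \<union> insert w R = insert w G \<union> R" by simp
    moreover have "insert w G \<union> R \<in> C \<longleftrightarrow> \<not> M \<subseteq> insert w G \<and> \<not> N \<subseteq> insert w G" by (rule relD(5)[OF r G'])
    moreover have "M \<subseteq> insert w G \<longleftrightarrow> M - {w} \<subseteq> G" by blast
    moreover have "N \<subseteq> insert w G \<longleftrightarrow> N \<subseteq> G" using wN by blast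
    ultimately show "G \<union> insert w R \<in> C \<longleftrightarrow> \<not> M - {w} \<subseteq> G \<and> \<not> N \<subseteq> G" by simp
  qed
qed
end

context bav begin

lemma nC: "T \<notin> C \<Longrightarrow> T \<subseteq> S \<Longrightarrow> S \<notin> C" using dcI by blast

lemma relD4: assumes r: "rel R {a1,a2} {b1,b2}"
  shows "R \<in> C" "a1 \<noteq> b1" "a1 \<noteq> b2" "a2 \<noteq> b1" "a2 \<noteq> b2"
    "a1 \<notin> R" "a2 \<notin> R" "b1 \<notin> R" "b2 \<notin> R" "a1 \<in> V" "a2 \<in> V" "b1 \<in> V" "b2 \<in> V"
    "G \<subseteq> {a1,a2,b1,b2} \<Longrightarrow> G \<union> R \<in> C \<longleftrightarrow> \<not> {a1,a2} \<subseteq> G \<and> \<not> {b1,b2} \<subseteq> G"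
proof -
  show "R \<in> C" using relD(1)[OF r] .
  show "a1 \<noteq> b1" "a1 \<noteq> b2" "a2 \<noteq> b1" "a2 \<noteq> b2" using relD(2)[OF r] by auto
  show "a1 \<notin> R" "a2 \<notin> R" "b1 \<notin> R" "b2 \<notin> R" using relD(3)[OF r] by auto
  show "a1 \<in> V" "a2 \<in> V" "b1 \<in> V" "b2 \<in> V" using relD(4)[OF r] by auto
  have U: "{a1,a2} \<union> {b1,b2} = {a1,a2,b1,b2}" by auto
  show "G \<subseteq> {a1,a2,b1,b2} \<Longrightarrow> G \<union> R \<in> C \<longleftrightarrow> \<not> {a1,a2} \<subseteq> G \<and> \<not> {b1,b2} \<subseteq> G"
    using relD(5)[OF r, of G] unfolding U by blast
qed

lemma base_vert_aux:
  assumes r: "rel R {a1,a2} {b,b'}" and d: "a1 \<noteq> a2" "b \<noteq> b'"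
    and v: "v \<in> V" "v \<notin> {a1,a2,b,b'}" "v \<notin> R" "insert v R \<in> C"
    and na1: "insert a1 (insert v R) \<notin> C"
    and a2b: "insert b (insert v (insert a2 R)) \<in> C"
  shows False
proof -
  have R: "R \<in> C" using relD(1)[OF r] .
  have dj: "a1 \<noteq> b" "a1 \<noteq> b'" "a2 \<noteq> b" "a2 \<noteq> b'" using relD(2)[OF r] by auto
  have nR: "a1 \<notin> R" "a2 \<notin> R" "b \<notin> R" "b' \<notin> R" using relD(3)[OF r] by auto
  have inV: "a1 \<in> V" "a2 \<in> V" "b \<in> V" "b' \<in> V" using relD(4)[OF r] by auto
  have U: "{a1,a2} \<union> {b,b'} = {a1,a2,b,b'}" by auto
  have D: "G \<subseteq> {a1,a2,b,b'} \<Longrightarrow> G \<union> R \<in> C \<longleftrightarrow> \<not> {a1,a2} \<subseteq> G \<and> \<not> {b,b'} \<subseteq> G" for G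
    using relD(5)[OF r, of G] unfolding U by blast
  have La2: "insert a2 (insert v R) \<in> C" by (rule dcI[OF a2b]) blast
  have e1: "{a1,b} \<union> R \<in> C" "{a1,b'} \<union> R \<in> C" "{a2,b'} \<union> R \<in> C" "{a2,b} \<union> R \<in> C"
    by (rule D[THEN iffD2]; use d dj in auto)+
  have n1: "{a1,a2} \<union> R \<notin> C" "{b,b'} \<union> R \<notin> C" by (subst D; simp)+
  show False
  proof (cases "insert b' (insert v R) \<in> C")
    case False
    show False
    proof (rule P4_forb[OF R, of v a2 b' a1])
      show "distinct [v, a2, b', a1]" using d dj v by auto
      show "{v, a2, b', a1} \<subseteq> V" using v inV by auto
      show "{v, a2, b', a1} \<inter> R = {}" using v nR by auto
      show "{v, a2} \<union> R \<in> C" using La2 by (simp add: insert_commute)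
      show "{a2, b'} \<union> R \<in> C" using e1 by simp
      show "{b', a1} \<union> R \<in> C" using e1 by (simp add: insert_commute)
      show "{v, b'} \<union> R \<notin> C" using False by (simp add: insert_commute)
      show "{a2, a1} \<union> R \<notin> C" using n1 by (simp add: insert_commute)
      show "{v, a1} \<union> R \<notin> C" using na1 by (simp add: insert_commute)
    qed
  next
    case True
    have "insert a1 (insert v (insert b' R)) \<in> C \<or> insert a2 (insert v (insert b' R)) \<in> C"
    proof (rule two_pts)
      show "insert b' R \<in> C" by (rule dcI[OF True]) blast
      show "a1 \<noteq> a2" "v \<noteq> a1" "v \<noteq> a2" using d v by auto
      show "a1 \<in> V" "a2 \<in> V" "v \<in> V" using inV v by auto
      show "a1 \<notin> insert b' R" "a2 \<notin> insert b' R" "v \<notin> insert b' R" using nR dj v by auto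
      show "insert a1 (insert b' R) \<in> C" "insert a2 (insert b' R) \<in> C" using e1 by (simp_all add: insert_commute)
      show "insert v (insert b' R) \<in> C" using True by (simp add: insert_commute)
      show "insert a1 (insert a2 (insert b' R)) \<notin> C"
      proof
        assume "insert a1 (insert a2 (insert b' R)) \<in> C"
        then have "{a1,a2} \<union> R \<in> C" by (rule dcI) blast
        with n1 show False by blast
      qed
    qed
    moreover have "insert a1 (insert v (insert b' R)) \<notin> C"
    proof
      assume "insert a1 (insert v (insert b' R)) \<in> C"
      then have "insert a1 (insert v R) \<in> C" by (rule dcI) blast
      with na1 show False by blast
    qed
    ultimately have a2b': "insert a2 (insert v (insert b' R)) \<in> C" by blast
    show False
    proof (rule J1_forb[OF R, of a1 b v a2 b'])
      show "distinct [a1, b, v, a2, b']" using d dj v by auto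
      show "{a1, b, v, a2, b'} \<subseteq> V" using v inV by auto
      show "{a1, b, v, a2, b'} \<inter> R = {}" using v nR by auto
      show "{a1, b} \<union> R \<in> C" "{a1, b'} \<union> R \<in> C" using e1 by simp_all
      show "{b, v, a2} \<union> R \<in> C" using a2b by (simp add: insert_commute)
      show "{v, a2, b'} \<union> R \<in> C" using a2b' by (simp add: insert_commute)
      show "{a1, v} \<union> R \<notin> C" using na1 by simp
      show "{a1, a2} \<union> R \<notin> C" using n1 by simp
      show "{b, b'} \<union> R \<notin> C" using n1 by simp
    qed
  qed
qed


lemma base_vert:
  assumes r: "rel R {a1,a2} {b1,b2}" and d: "a1 \<noteq> a2" "b1 \<noteq> b2"
    and v: "v \<in> V" "v \<notin> {a1,a2,b1,b2}" "v \<notin> R" "insert v R \<in> C"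
  shows "insert a1 (insert v R) \<in> C"
proof (rule ccontr)
  assume na1: "insert a1 (insert v R) \<notin> C"
  note F = relD4[OF r]
  have La: "insert a1 (insert v R) \<in> C \<or> insert a2 (insert v R) \<in> C"
  proof (rule two_pts)
    show "R \<in> C" "a1 \<noteq> a2" "v \<noteq> a1" "v \<noteq> a2" "a1 \<in> V" "a2 \<in> V" "v \<in> V" "a1 \<notin> R" "a2 \<notin> R" "v \<notin> R"
      "insert v R \<in> C" using F d v by auto
    show "insert a1 R \<in> C" using F(14)[of "{a1}"] F d by simp
    show "insert a2 R \<in> C" using F(14)[of "{a2}"] F d by simp
    show "insert a1 (insert a2 R) \<notin> C" using F(14)[of "{a1,a2}"] by simp
  qed
  then have La2: "insert a2 (insert v R) \<in> C" using na1 by blast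
  have "insert b1 (insert v (insert a2 R)) \<in> C \<or> insert b2 (insert v (insert a2 R)) \<in> C"
  proof (rule two_pts)
    show "insert a2 R \<in> C" by (rule dcI[OF La2]) blast
    show "b1 \<noteq> b2" "v \<noteq> b1" "v \<noteq> b2" "b1 \<in> V" "b2 \<in> V" "v \<in> V" "b1 \<notin> insert a2 R" "b2 \<notin> insert a2 R" "v \<notin> insert a2 R"
      using F d v by auto
    show "insert v (insert a2 R) \<in> C" using La2 by (simp add: insert_commute)
    show "insert b1 (insert a2 R) \<in> C" using F(14)[of "{a2,b1}"] F d by (simp add: insert_commute)
    show "insert b2 (insert a2 R) \<in> C" using F(14)[of "{a2,b2}"] F d by (simp add: insert_commute)
    show "insert b1 (insert b2 (insert a2 R)) \<notin> C" using F(14)[of "{a2,b1,b2}"] by (simp add: insert_commute)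
  qed
  then show False
  proof
    assume "insert b1 (insert v (insert a2 R)) \<in> C"
    then show False by (rule base_vert_aux[OF r d v na1])
  next
    assume h: "insert b2 (insert v (insert a2 R)) \<in> C"
    have r': "rel R {a1,a2} {b2,b1}" using r by (simp add: insert_commute)
    show False by (rule base_vert_aux[OF r' d(1) d(2)[symmetric] v(1) _ v(3) v(4) na1 h]) (use v in auto)
  qed
qed


lemma base_edge:
  assumes r: "rel R {a1,a2} {b1,b2}" and d: "a1 \<noteq> a2" "b1 \<noteq> b2"
    and v: "v \<in> V" "v \<notin> {a1,a2,b1,b2}" "v \<notin> R" "insert v R \<in> C"
    and L: "insert a1 (insert v R) \<in> C" "insert a2 (insert v R) \<in> C"
      "insert b1 (insert v R) \<in> C" "insert b2 (insert v R) \<in> C"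
  shows "insert a1 (insert b1 (insert v R)) \<in> C"
proof (rule ccontr)
  assume n: "insert a1 (insert b1 (insert v R)) \<notin> C"
  note F = relD4[OF r]
  have n1: "{a1,a2} \<union> R \<notin> C" "{b1,b2} \<union> R \<notin> C" using F(14)[of "{a1,a2}"] F(14)[of "{b1,b2}"] by simp_all
  have "insert b1 (insert v (insert a1 R)) \<in> C \<or> insert b2 (insert v (insert a1 R)) \<in> C"
  proof (rule two_pts)
    show "insert a1 R \<in> C" using F(14)[of "{a1}"] F d by simp
    show "b1 \<noteq> b2" "v \<noteq> b1" "v \<noteq> b2" "b1 \<in> V" "b2 \<in> V" "v \<in> V" "b1 \<notin> insert a1 R" "b2 \<notin> insert a1 R" "v \<notin> insert a1 R"
      using F d v by auto
    show "insert v (insert a1 R) \<in> C" by (rule dcI[OF L(1)]) blast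
    show "insert b1 (insert a1 R) \<in> C" using F(14)[of "{a1,b1}"] F d by (simp add: insert_commute)
    show "insert b2 (insert a1 R) \<in> C" using F(14)[of "{a1,b2}"] F d by (simp add: insert_commute)
    show "insert b1 (insert b2 (insert a1 R)) \<notin> C" using F(14)[of "{a1,b1,b2}"] by (simp add: insert_commute)
  qed
  then have E12: "insert a1 (insert b2 (insert v R)) \<in> C" using n by (auto simp: insert_commute)
  have "insert a1 (insert v (insert b1 R)) \<in> C \<or> insert a2 (insert v (insert b1 R)) \<in> C"
  proof (rule two_pts)
    show "insert b1 R \<in> C" using F(14)[of "{b1}"] F d by simp
    show "a1 \<noteq> a2" "v \<noteq> a1" "v \<noteq> a2" "a1 \<in> V" "a2 \<in> V" "v \<in> V" "a1 \<notin> insert b1 R" "a2 \<notin> insert b1 R" "v \<notin> insert b1 R"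
      using F d v by auto
    show "insert v (insert b1 R) \<in> C" by (rule dcI[OF L(3)]) blast
    show "insert a1 (insert b1 R) \<in> C" using F(14)[of "{a1,b1}"] F d by (simp add: insert_commute)
    show "insert a2 (insert b1 R) \<in> C" using F(14)[of "{a2,b1}"] F d by (simp add: insert_commute)
    show "insert a1 (insert a2 (insert b1 R)) \<notin> C" using F(14)[of "{a1,a2,b1}"] by (simp add: insert_commute)
  qed
  then have E21: "insert a2 (insert b1 (insert v R)) \<in> C" using n by (auto simp: insert_commute)
  have D12: "{a1,b2} \<union> R \<in> C" "{a2,b1} \<union> R \<in> C" "{a1,b1} \<union> R \<in> C" "{a2,b2} \<union> R \<in> C"
    using F(14)[of "{a1,b2}"] F(14)[of "{a2,b1}"] F(14)[of "{a1,b1}"] F(14)[of "{a2,b2}"] F d by simp_all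
  show False
  proof (cases "insert a2 (insert b2 (insert v R)) \<in> C")
    case True
    show False
    proof (rule P4_forb[of "insert v R" a1 b2 a2 b1])
      show "insert v R \<in> C" by fact
      show "distinct [a1, b2, a2, b1]" using F d by auto
      show "{a1, b2, a2, b1} \<subseteq> V" using F by auto
      show "{a1, b2, a2, b1} \<inter> insert v R = {}" using F v by auto
      show "{a1, b2} \<union> insert v R \<in> C" by (rule dcI[OF E12]) blast
      show "{b2, a2} \<union> insert v R \<in> C" by (rule dcI[OF True]) blast
      show "{a2, b1} \<union> insert v R \<in> C" by (rule dcI[OF E21]) blast
      show "{a1, b1} \<union> insert v R \<notin> C" by (rule nC[OF n]) blast
      show "{b2, b1} \<union> insert v R \<notin> C"
      proof
        assume "{b2, b1} \<union> insert v R \<in> C"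
        then have "{b1,b2} \<union> R \<in> C" by (rule dcI) blast
        with n1 show False by blast
      qed
      show "{a1, a2} \<union> insert v R \<notin> C"
      proof
        assume "{a1, a2} \<union> insert v R \<in> C"
        then have "{a1,a2} \<union> R \<in> C" by (rule dcI) blast
        with n1 show False by blast
      qed
    qed
  next
    case False
    show False
    proof (rule J2_forb[of R b1 a1 b2 a2 v])
      show "R \<in> C" using F by simp
      show "distinct [b1, a1, b2, a2, v]" using F d v by auto
      show "{b1, a1, b2, a2, v} \<subseteq> V" using F v by auto
      show "{b1, a1, b2, a2, v} \<inter> R = {}" using F v by auto
      show "{b1, a1} \<union> R \<in> C" by (rule dcI[OF D12(3)]) blast
      show "{a1, b2, v} \<union> R \<in> C" by (rule dcI[OF E12]) blast
      show "{b2, a2} \<union> R \<in> C" by (rule dcI[OF D12(4)]) blast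
      show "{b1, a2, v} \<union> R \<in> C" by (rule dcI[OF E21]) blast
      show "{b1, b2} \<union> R \<notin> C" "{a1, a2} \<union> R \<notin> C" using n1 by simp_all
      show "{b1, a1, v} \<union> R \<notin> C" by (rule nC[OF n]) blast
      show "{b2, a2, v} \<union> R \<notin> C" by (rule nC[OF False]) blast
    qed
  qed
qed

lemma base:
  assumes r: "rel R {a1,a2} {b1,b2}" and d: "a1 \<noteq> a2" "b1 \<noteq> b2"
    and v: "v \<in> V" "v \<notin> {a1,a2,b1,b2}" "v \<notin> R" "insert v R \<in> C"
    and G: "G \<subseteq> {a1,a2} \<union> {b1,b2}" "\<not> {a1,a2} \<subseteq> G" "\<not> {b1,b2} \<subseteq> G"
  shows "insert v (G \<union> R) \<in> C"
proof -
  have r2: "rel R {a2,a1} {b1,b2}" "rel R {a1,a2} {b2,b1}" "rel R {a2,a1} {b2,b1}"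
    using r by (simp_all add: insert_commute)
  have r3: "rel R {b1,b2} {a1,a2}" "rel R {b2,b1} {a1,a2}" using rel_sym[OF r] by (simp_all add: insert_commute)
  have vs: "v \<notin> {a2,a1,b1,b2}" "v \<notin> {b1,b2,a1,a2}" "v \<notin> {b2,b1,a1,a2}" "v \<notin> {a1,a2,b2,b1}" "v \<notin> {a2,a1,b2,b1}"
    using v(2) by auto
  have L: "insert a1 (insert v R) \<in> C" "insert a2 (insert v R) \<in> C"
      "insert b1 (insert v R) \<in> C" "insert b2 (insert v R) \<in> C"
    using base_vert[OF r d v] base_vert[OF r2(1) d(1)[symmetric] d(2) v(1) vs(1) v(3,4)]
      base_vert[OF r3(1) d(2) d(1) v(1) vs(2) v(3,4)] base_vert[OF r3(2) d(2)[symmetric] d(1) v(1) vs(3) v(3,4)]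
    by auto
  have E: "insert a1 (insert b1 (insert v R)) \<in> C" "insert a1 (insert b2 (insert v R)) \<in> C"
    "insert a2 (insert b1 (insert v R)) \<in> C" "insert a2 (insert b2 (insert v R)) \<in> C"
    using base_edge[OF r d v L] base_edge[OF r2(2) d(1) d(2)[symmetric] v(1) vs(4) v(3,4) L(1,2,4,3)]
      base_edge[OF r2(1) d(1)[symmetric] d(2) v(1) vs(1) v(3,4) L(2,1,3,4)]
      base_edge[OF r2(3) d(1)[symmetric] d(2)[symmetric] v(1) vs(5) v(3,4) L(2,1,4,3)]
    by auto
  have "\<exists>a\<in>{a1,a2}. \<exists>b\<in>{b1,b2}. G \<subseteq> {a,b}"
  proof (cases "a1 \<in> G"; cases "b1 \<in> G")
    assume "a1 \<in> G" "b1 \<in> G" then show ?thesis using G by blast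
  next
    assume "a1 \<in> G" "b1 \<notin> G" then show ?thesis using G by blast
  next
    assume "a1 \<notin> G" "b1 \<in> G" then show ?thesis using G by blast
  next
    assume "a1 \<notin> G" "b1 \<notin> G" then show ?thesis using G by blast
  qed
  then obtain a b where ab: "a \<in> {a1,a2}" "b \<in> {b1,b2}" "G \<subseteq> {a,b}" by blast
  have "insert a (insert b (insert v R)) \<in> C" using ab(1,2) E by blast
  then show ?thesis by (rule dcI) (use ab(3) in blast)
qed


definition cok :: "'a set \<Rightarrow> 'a set \<Rightarrow> 'a set \<Rightarrow> 'a \<Rightarrow> bool" where
  "cok R M N v \<longleftrightarrow> (\<forall>G. G \<subseteq> M \<union> N \<longrightarrow> \<not> M \<subseteq> G \<longrightarrow> \<not> N \<subseteq> G \<longrightarrow> insert v (G \<union> R) \<in> C)"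

lemma cok_sym: "cok R M N v \<Longrightarrow> cok R N M v"
  unfolding cok_def by (simp add: sup_commute conj_commute)

lemma two_not_sub: "finite S \<Longrightarrow> 2 \<le> card S \<Longrightarrow> \<not> S \<subseteq> {x}"
  using card_mono[of "{x}" S] by auto

lemma rel_fin: "rel R M N \<Longrightarrow> finite M \<and> finite N"
proof -
  assume "rel R M N"
  then have "M \<union> N \<subseteq> V" by (rule relD(4))
  then show ?thesis using fin finite_subset by auto
qed

lemma step:
  assumes IH: "\<And>R' M'. card M' < card M \<Longrightarrow> rel R' M' N \<Longrightarrow> 2 \<le> card M' \<Longrightarrow> v \<notin> M' \<Longrightarrow> v \<notin> R'
      \<Longrightarrow> insert v R' \<in> C \<Longrightarrow> cok R' M' N v"
    and r: "rel R M N" and cM: "3 \<le> card M" and cN: "2 \<le> card N"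
    and v: "v \<in> V" "v \<notin> M" "v \<notin> N" "v \<notin> R" "insert v R \<in> C"
  shows "cok R M N v"
proof -
  have finM: "finite M" and finN: "finite N" using rel_fin[OF r] by auto
  have R: "R \<in> C" using relD(1)[OF r] .
  have Nne: "N \<noteq> {}" using cN by auto
  have MN: "M \<inter> N = {}" using relD(2)[OF r] .
  have key: "\<forall>G. G \<subseteq> M \<union> N \<longrightarrow> \<not> N \<subseteq> G \<longrightarrow> \<not> (M - {w}) \<subseteq> G \<longrightarrow> insert v (G \<union> R) \<in> C"
    if w: "w \<in> M" "insert w (insert v R) \<in> C" for w
  proof (intro allI impI)
    fix G assume G: "G \<subseteq> M \<union> N" "\<not> N \<subseteq> G" "\<not> (M - {w}) \<subseteq> G"
    have r': "rel (insert w R) (M - {w}) N" by (rule rel_link[OF r w(1) _ Nne]) (use cM in simp)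
    have cM': "card (M - {w}) < card M" "2 \<le> card (M - {w})" using cM w(1) finM by (simp_all add: card_Diff_singleton)
    have vw: "v \<noteq> w" using v(2) w(1) by blast
    have c: "cok (insert w R) (M - {w}) N v"
    proof (rule IH[OF cM'(1) r' cM'(2)])
      show "v \<notin> M - {w}" "v \<notin> insert w R" using v vw by auto
      show "insert v (insert w R) \<in> C" by (rule dcI[OF w(2)]) blast
    qed
    have "insert v ((G - {w}) \<union> insert w R) \<in> C"
    proof (rule c[unfolded cok_def, rule_format])
      show "G - {w} \<subseteq> M - {w} \<union> N" using G(1) by blast
      show "\<not> M - {w} \<subseteq> G - {w}" using G(3) by blast
      show "\<not> N \<subseteq> G - {w}" using G(2) by blast
    qed
    then show "insert v (G \<union> R) \<in> C" by (rule dcI) blast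
  qed
  obtain w0 where w0: "w0 \<in> M" "insert w0 (insert v R) \<in> C"
  proof (rule ccontr)
    assume h: "\<not> thesis"
    have nz: "\<forall>z\<in>M. insert z (insert v R) \<notin> C" using h that by blast
    show False
    proof (rule bpp_forb[OF R finM _ _ v(1) v(2) _ _ _ v(5) nz])
      show "2 \<le> card M" using cM by simp
      show "M \<subseteq> V" using relD(4)[OF r] by blast
      show "insert v M \<inter> R = {}" using relD(3)[OF r] v(4) by blast
      show "\<forall>z\<in>M. M - {z} \<union> R \<in> C"
      proof
        fix z assume z: "z \<in> M"
        have "M - {z} \<subseteq> M \<union> N" "\<not> M \<subseteq> M - {z}" "\<not> N \<subseteq> M - {z}" using z MN Nne by auto
        then show "M - {z} \<union> R \<in> C" using relD(5)[OF r, of "M - {z}"] by simp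
      qed
      show "M \<union> R \<notin> C" using relD(5)[OF r, of M] by simp
    qed
  qed
  have vert: "insert x (insert v R) \<in> C" if x: "x \<in> M \<union> N" for x
  proof -
    have "\<not> N \<subseteq> {x}" by (rule two_not_sub[OF finN cN])
    moreover have "\<not> (M - {w0}) \<subseteq> {x}"
      by (rule two_not_sub) (use finM cM w0(1) in \<open>simp_all add: card_Diff_singleton\<close>)
    ultimately have "insert v ({x} \<union> R) \<in> C" using key[OF w0, rule_format, of "{x}"] x by simp
    then show ?thesis by (rule dcI) blast
  qed
  show ?thesis unfolding cok_def
  proof (intro allI impI)
    fix G assume G: "G \<subseteq> M \<union> N" "\<not> M \<subseteq> G" "\<not> N \<subseteq> G"
    show "insert v (G \<union> R) \<in> C"
    proof (cases "M - {w0} \<subseteq> G")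
      case False
      then show ?thesis using key[OF w0, rule_format, of G] G by simp
    next
      case True
      then have w0G: "w0 \<notin> G" using G(2) by blast
      have "card (M - {w0}) \<ge> 2" using cM w0(1) finM by (simp add: card_Diff_singleton)
      then have "M - {w0} \<noteq> {}" by (metis card.empty not_numeral_le_zero)
      then obtain w' where w': "w' \<in> M" "w' \<noteq> w0" by blast
      have "\<not> (M - {w'}) \<subseteq> G" using w0G w0(1) w'(2) by blast
      then show ?thesis using key[OF w'(1) vert, rule_format, of G] w'(1) G by simp
    qed
  qed
qed


lemma cone_vertex:
  "rel R M N \<Longrightarrow> 2 \<le> card M \<Longrightarrow> 2 \<le> card N \<Longrightarrow> v \<in> V \<Longrightarrow> v \<notin> M \<Longrightarrow> v \<notin> N \<Longrightarrow> v \<notin> R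
    \<Longrightarrow> insert v R \<in> C \<Longrightarrow> cok R M N v"
proof (induction "card M + card N" arbitrary: R M N rule: less_induct)
  case less
  note P = less.prems
  show ?case
  proof (cases "3 \<le> card M")
    case True
    show ?thesis
    proof (rule step[OF _ P(1) True P(3) P(4-8)])
      fix R' M' assume h: "card M' < card M" "rel R' M' N" "2 \<le> card M'" "v \<notin> M'" "v \<notin> R'" "insert v R' \<in> C"
      show "cok R' M' N v" by (rule less.hyps) (use h P in auto)
    qed
  next
    case F1: False
    show ?thesis
    proof (cases "3 \<le> card N")
      case True
      have "cok R N M v"
      proof (rule step[OF _ rel_sym[OF P(1)] True P(2) P(4) P(6) P(5) P(7,8)])
        fix R' N' assume h: "card N' < card N" "rel R' N' M" "2 \<le> card N'" "v \<notin> N'" "v \<notin> R'" "insert v R' \<in> C"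
        have "cok R' M N' v" by (rule less.hyps) (use h P rel_sym in auto)
        then show "cok R' N' M v" by (rule cok_sym)
      qed
      then show ?thesis by (rule cok_sym)
    next
      case False
      then have "card M = 2" "card N = 2" using F1 P(2,3) by auto
      then obtain a1 a2 b1 b2 where ab: "M = {a1,a2}" "a1 \<noteq> a2" "N = {b1,b2}" "b1 \<noteq> b2"
        unfolding card_2_iff by blast
      show ?thesis unfolding cok_def
      proof (intro allI impI)
        fix G assume G: "G \<subseteq> M \<union> N" "\<not> M \<subseteq> G" "\<not> N \<subseteq> G"
        show "insert v (G \<union> R) \<in> C"
          by (rule base[of R a1 a2 b1 b2]) (use P ab G in auto)
      qed
    qed
  qed
qed


lemma two_elems: assumes "finite M" "2 \<le> card M" obtains a1 a2 where "a1 \<in> M" "a2 \<in> M" "a1 \<noteq> a2"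
proof -
  have "M \<noteq> {}" using assms by auto
  then obtain a1 where a1: "a1 \<in> M" by blast
  have "card (M - {a1}) \<ge> 1" using assms a1 by (simp add: card_Diff_singleton)
  then have "M - {a1} \<noteq> {}" by (metis card.empty not_one_le_zero)
  then obtain a2 where "a2 \<in> M - {a1}" by blast
  then show ?thesis using that a1 by blast
qed

lemma pair:
  assumes r: "rel R M N" and cM: "2 \<le> card M" and cN: "2 \<le> card N" and uv: "u \<noteq> v"
    and u: "u \<in> V" "u \<notin> M" "u \<notin> N" "u \<notin> R" "insert u R \<in> C"
    and v: "v \<in> V" "v \<notin> M" "v \<notin> N" "v \<notin> R" "insert v R \<in> C"
  shows "insert u (insert v R) \<in> C"
proof (rule ccontr)
  assume nuv: "insert u (insert v R) \<notin> C"
  have cu: "cok R M N u" by (rule cone_vertex[OF r cM cN u])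
  have cv: "cok R M N v" by (rule cone_vertex[OF r cM cN v])
  have finM: "finite M" and finN: "finite N" using rel_fin[OF r] by auto
  obtain a1 a2 where a: "a1 \<in> M" "a2 \<in> M" "a1 \<noteq> a2" using two_elems[OF finM cM] by blast
  obtain b1 b2 where b: "b1 \<in> N" "b2 \<in> N" "b1 \<noteq> b2" using two_elems[OF finN cN] by blast
  have MN: "M \<inter> N = {}" using relD(2)[OF r] .
  have WR: "(M \<union> N) \<inter> R = {}" using relD(3)[OF r] .
  have WV: "M \<union> N \<subseteq> V" using relD(4)[OF r] .
  define S where "S = (M - {a1,a2}) \<union> (N - {b1,b2})"
  have SW: "S \<subseteq> M \<union> N" unfolding S_def by blast
  have nS: "a1 \<notin> S" "a2 \<notin> S" "b1 \<notin> S" "b2 \<notin> S" "u \<notin> S" "v \<notin> S" unfolding S_def using a b MN u v by auto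
  have D: "H \<subseteq> M \<union> N \<Longrightarrow> H \<union> R \<in> C \<longleftrightarrow> \<not> M \<subseteq> H \<and> \<not> N \<subseteq> H" for H by (rule relD(5)[OF r])
  have RS: "S \<union> R \<in> C"
  proof -
    have "\<not> M \<subseteq> S" "\<not> N \<subseteq> S" using nS a b by auto
    then show ?thesis using D[OF SW] by simp
  qed
  let ?X = "{a1,a2,b1,b2,u,v}"
  have dist: "distinct [a1,a2,b1,b2,u,v]" using a b MN u v uv by auto
  show False
  proof (rule O6_forb[of "S \<union> R" a1 a2 b1 b2 u v])
    show "S \<union> R \<in> C" by fact
    show "distinct [a1,a2,b1,b2,u,v]" by fact
    show "?X \<subseteq> V" using a b WV u v by auto
    show "?X \<inter> (S \<union> R) = {}" using nS a b WR u v by auto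
    show "\<forall>G. G \<subseteq> ?X \<longrightarrow>
       (G \<union> (S \<union> R) \<in> C \<longleftrightarrow> \<not> {a1,a2} \<subseteq> G \<and> \<not> {b1,b2} \<subseteq> G \<and> \<not> {u,v} \<subseteq> G)"
    proof (intro allI impI)
      fix G assume G: "G \<subseteq> ?X"
      define H where "H = (G - {u,v}) \<union> S"
      have HW: "H \<subseteq> M \<union> N" unfolding H_def using G SW a b by blast
      have HM: "M \<subseteq> H \<longleftrightarrow> {a1,a2} \<subseteq> G"
      proof
        assume "M \<subseteq> H" then show "{a1,a2} \<subseteq> G" unfolding H_def using a nS by blast
      next
        assume "{a1,a2} \<subseteq> G" then show "M \<subseteq> H" unfolding H_def S_def using u(2) v(2) by blast
      qed
      have HN: "N \<subseteq> H \<longleftrightarrow> {b1,b2} \<subseteq> G"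
      proof
        assume "N \<subseteq> H" then show "{b1,b2} \<subseteq> G" unfolding H_def using b nS by blast
      next
        assume "{b1,b2} \<subseteq> G" then show "N \<subseteq> H" unfolding H_def S_def using u(3) v(3) by blast
      qed
      have DH: "H \<union> R \<in> C \<longleftrightarrow> \<not> {a1,a2} \<subseteq> G \<and> \<not> {b1,b2} \<subseteq> G" using D[OF HW] HM HN by simp
      have eq: "G \<union> (S \<union> R) = (G \<inter> {u,v}) \<union> (H \<union> R)" unfolding H_def by blast
      have HR: "H \<union> R \<subseteq> G \<union> (S \<union> R)" unfolding eq by blast
      show "G \<union> (S \<union> R) \<in> C \<longleftrightarrow> \<not> {a1,a2} \<subseteq> G \<and> \<not> {b1,b2} \<subseteq> G \<and> \<not> {u,v} \<subseteq> G"
      proof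
        assume h: "G \<union> (S \<union> R) \<in> C"
        have "H \<union> R \<in> C" by (rule dcI[OF h HR])
        moreover have "\<not> {u,v} \<subseteq> G"
        proof
          assume "{u,v} \<subseteq> G"
          then have "insert u (insert v R) \<subseteq> G \<union> (S \<union> R)" by blast
          then show False using dcI[OF h] nuv by blast
        qed
        ultimately show "\<not> {a1,a2} \<subseteq> G \<and> \<not> {b1,b2} \<subseteq> G \<and> \<not> {u,v} \<subseteq> G" using DH by blast
      next
        assume h: "\<not> {a1,a2} \<subseteq> G \<and> \<not> {b1,b2} \<subseteq> G \<and> \<not> {u,v} \<subseteq> G"
        have HH: "\<not> M \<subseteq> H" "\<not> N \<subseteq> H" using h HM HN by auto
        show "G \<union> (S \<union> R) \<in> C"
        proof (cases "u \<in> G")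
          case True
          then have "v \<notin> G" using h by blast
          then have "G \<union> (S \<union> R) = insert u (H \<union> R)" using True unfolding eq by blast
          moreover have "insert u (H \<union> R) \<in> C" using cu HW HH unfolding cok_def by blast
          ultimately show ?thesis by simp
        next
          case False
          show ?thesis
          proof (cases "v \<in> G")
            case True
            then have "G \<union> (S \<union> R) = insert v (H \<union> R)" using False unfolding eq by blast
            moreover have "insert v (H \<union> R) \<in> C" using cv HW HH unfolding cok_def by blast
            ultimately show ?thesis by simp
          next
            case F2: False
            then have "G \<union> (S \<union> R) = H \<union> R" using False unfolding eq by blast
            moreover have "H \<union> R \<in> C" using DH h by blast
            ultimately show ?thesis by simp
          qed
        qed
      qed
    qed
  qed
qed


lemma relT:
  assumes r: "rel {} M N" and cM: "2 \<le> card M" and cN: "2 \<le> card N" and TV: "T \<subseteq> V" and TW: "T \<inter> (M \<union> N) = {}"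
    and h: "\<forall>G. G \<subseteq> M \<union> N \<longrightarrow> \<not> M \<subseteq> G \<longrightarrow> \<not> N \<subseteq> G \<longrightarrow> G \<union> T \<in> C"
  shows "rel T M N"
  unfolding rel_def
proof (intro conjI allI impI)
  have finM: "finite M" using rel_fin[OF r] by blast
  have "\<not> M \<subseteq> {}" using cM by auto
  moreover have "\<not> N \<subseteq> {}" using cN by auto
  ultimately show "T \<in> C" using h by auto
  show "M \<inter> N = {}" using relD(2)[OF r] .
  show "(M \<union> N) \<inter> T = {}" using TW by blast
  show "M \<union> N \<subseteq> V" using relD(4)[OF r] .
  fix G assume G: "G \<subseteq> M \<union> N"
  show "G \<union> T \<in> C \<longleftrightarrow> \<not> M \<subseteq> G \<and> \<not> N \<subseteq> G"
  proof
    assume "G \<union> T \<in> C"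
    then have "G \<union> {} \<in> C" by (rule dcI) blast
    then show "\<not> M \<subseteq> G \<and> \<not> N \<subseteq> G" using relD(5)[OF r G] by simp
  qed (use h G in blast)
qed


lemma claim:
  assumes r: "rel {} M N" and cM: "2 \<le> card M" and cN: "2 \<le> card N"
    and UV: "U \<subseteq> V" and UW: "U \<inter> (M \<union> N) = {}" and Ug: "\<forall>u\<in>U. {u} \<in> C"
  shows "T \<subseteq> U \<Longrightarrow> \<forall>G. G \<subseteq> M \<union> N \<longrightarrow> \<not> M \<subseteq> G \<longrightarrow> \<not> N \<subseteq> G \<longrightarrow> G \<union> T \<in> C"
proof (induction "card T" arbitrary: T rule: less_induct)
  case less
  have finU: "finite U" using UV fin finite_subset by blast
  have finT: "finite T" using less.prems finU finite_subset by blast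
  have relS: "rel T' M N" if T': "T' \<subseteq> U" "card T' < card T" for T'
    by (rule relT[OF r cM cN]) (use T' UV UW less.hyps[OF T'(2,1)] in auto)
  show ?case
  proof (cases "T = {}")
    case True
    then show ?thesis using relD(5)[OF r] by simp
  next
    case False
    then obtain u where u: "u \<in> T" by blast
    define T0 where "T0 = T - {u}"
    have T0: "T0 \<subseteq> U" "card T0 < card T" using less.prems card_Diff1_less[OF finT u] unfolding T0_def
      by auto
    have r0: "rel T0 M N" by (rule relS[OF T0])
    have uU: "u \<in> U" using u less.prems by blast
    have uV: "u \<in> V" "u \<notin> M" "u \<notin> N" "u \<notin> T0" using uU UV UW unfolding T0_def by auto
    have TC: "T \<in> C"
    proof (cases "T0 = {}")
      case True
      then have "T = {u}" using u unfolding T0_def by blast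
      then show ?thesis using Ug uU by simp
    next
      case False
      then obtain v where v: "v \<in> T0" by blast
      define T1 where "T1 = T0 - {v}"
      have vU: "v \<in> U" using v T0 by blast
      have vV: "v \<in> V" "v \<notin> M" "v \<notin> N" "v \<notin> T1" using vU UV UW unfolding T1_def by auto
      have uv: "u \<noteq> v" using v unfolding T0_def by blast
      have "finite T0" using finT unfolding T0_def by blast
      then have T1: "T1 \<subseteq> U" "card T1 < card T" using T0 card_Diff1_less[of T0 v] v unfolding T1_def
        by auto
      have "v \<in> T" using v unfolding T0_def by blast
      then have Tv: "T - {v} \<subseteq> U" "card (T - {v}) < card T" using less.prems card_Diff1_less[OF finT] by auto
      have r1: "rel T1 M N" by (rule relS[OF T1])
      have e1: "insert u T1 = T - {v}" "insert v T1 = T0" "insert u (insert v T1) = T"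
        using u v unfolding T1_def T0_def by auto
      have "{} \<union> (T - {v}) \<in> C" using less.hyps[OF Tv(2,1)] cM cN by auto
      then have c1: "insert u T1 \<in> C" using e1 by simp
      have "{} \<union> T0 \<in> C" using less.hyps[OF T0(2,1)] cM cN by auto
      then have c2: "insert v T1 \<in> C" using e1 by simp
      have "insert u (insert v T1) \<in> C"
        by (rule pair[OF r1 cM cN uv uV(1-3) _ c1 vV(1-3) _ c2]) (use uV vV uv in \<open>auto simp: T1_def T0_def\<close>)
      then show ?thesis using e1 by simp
    qed
    have c: "cok T0 M N u" by (rule cone_vertex[OF r0 cM cN uV]) (use TC u in \<open>simp add: insert_absorb T0_def\<close>)
    show ?thesis
    proof (intro allI impI)
      fix G assume G: "G \<subseteq> M \<union> N" "\<not> M \<subseteq> G" "\<not> N \<subseteq> G"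
      have "insert u (G \<union> T0) \<in> C" using c G unfolding cok_def by blast
      moreover have "insert u (G \<union> T0) = G \<union> T" using u unfolding T0_def by blast
      ultimately show "G \<union> T \<in> C" by simp
    qed
  qed
qed


end

lemma final_iso:
  assumes bij: "bij_betw f W (fst L)" and WU: "W \<inter> U = {}" and finU: "finite U"
    and ch: "\<forall>F. F \<subseteq> W \<union> U \<longrightarrow> (F \<in> A \<longleftrightarrow> f ` (F \<inter> W) \<in> snd L)"
  shows "iso (W \<union> U, A) (cone (card U) L)"
proof -
  obtain g where g: "bij_betw g U {0..<card U}" using ex_bij_betw_finite_nat[OF finU] by blast
  define h where "h x = (if x \<in> W then Inl (f x) else Inr (g x))" for x
  have injf: "inj_on f W" using bij by (simp add: bij_betw_def)
  have injg: "inj_on g U" using g by (simp add: bij_betw_def)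
  have b1: "bij_betw h W (Inl ` fst L)" unfolding bij_betw_def
  proof
    show "inj_on h W"
    proof (rule inj_onI)
      fix x y assume "x \<in> W" "y \<in> W" "h x = h y"
      then have "f x = f y" by (simp add: h_def)
      then show "x = y" using injf \<open>x \<in> W\<close> \<open>y \<in> W\<close> by (simp add: inj_on_def)
    qed
    have "h ` W = (\<lambda>x. Inl (f x)) ` W" by (rule image_cong) (simp_all add: h_def)
    also have "\<dots> = Inl ` (f ` W)" by (simp add: image_image)
    also have "\<dots> = Inl ` fst L" using bij by (simp add: bij_betw_def)
    finally show "h ` W = Inl ` fst L" .
  qed
  have b2: "bij_betw h U (Inr ` {0..<card U})" unfolding bij_betw_def
  proof
    have hU: "\<And>x. x \<in> U \<Longrightarrow> h x = Inr (g x)" using WU unfolding h_def by auto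
    show "inj_on h U"
    proof (rule inj_onI)
      fix x y assume "x \<in> U" "y \<in> U" "h x = h y"
      then have "g x = g y" by (simp add: hU)
      then show "x = y" using injg \<open>x \<in> U\<close> \<open>y \<in> U\<close> by (simp add: inj_on_def)
    qed
    have "h ` U = (\<lambda>x. Inr (g x)) ` U" by (rule image_cong) (simp_all add: hU)
    also have "\<dots> = Inr ` (g ` U)" by (simp add: image_image)
    also have "\<dots> = Inr ` {0..<card U}" using g by (simp add: bij_betw_def)
    finally show "h ` U = Inr ` {0..<card U}" .
  qed
  have bh: "bij_betw h (W \<union> U) (Inl ` fst L \<union> Inr ` {0..<card U})"
    by (rule bij_betw_combine[OF b1 b2]) blast
  show ?thesis unfolding iso_def cone_def fst_conv snd_conv
  proof (intro exI[of _ h] conjI allI impI)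
    show "bij_betw h (W \<union> U) (Inl ` fst L \<union> Inr ` {0..<card U})" by fact
    fix F assume F: "F \<subseteq> W \<union> U"
    have hF: "h ` F = Inl ` (f ` (F \<inter> W)) \<union> Inr ` (g ` (F \<inter> U))"
    proof -
      have "h ` F = h ` (F \<inter> W) \<union> h ` (F \<inter> U)" using F by blast
      moreover have "h ` (F \<inter> W) = Inl ` (f ` (F \<inter> W))" unfolding h_def by force
      moreover have "h ` (F \<inter> U) = Inr ` (g ` (F \<inter> U))" unfolding h_def using WU by force
      ultimately show ?thesis by simp
    qed
    have gU: "g ` (F \<inter> U) \<subseteq> {0..<card U}" using g unfolding bij_betw_def by blast
    show "F \<in> A \<longleftrightarrow> h ` F \<in> {Inl ` F' \<union> Inr ` U' |F' U'. F' \<in> snd L \<and> U' \<subseteq> {0..<card U}}"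
    proof
      assume "F \<in> A"
      then have "f ` (F \<inter> W) \<in> snd L" using ch F by blast
      then show "h ` F \<in> {Inl ` F' \<union> Inr ` U' |F' U'. F' \<in> snd L \<and> U' \<subseteq> {0..<card U}}"
        unfolding hF using gU by blast
    next
      assume "h ` F \<in> {Inl ` F' \<union> Inr ` U' |F' U'. F' \<in> snd L \<and> U' \<subseteq> {0..<card U}}"
      then obtain F' U' where FU: "h ` F = Inl ` F' \<union> Inr ` U'" "F' \<in> snd L" by blast
      have "f ` (F \<inter> W) = F'"
      proof -
        have e: "Inl ` (f ` (F \<inter> W)) \<union> Inr ` (g ` (F \<inter> U)) = Inl ` F' \<union> Inr ` U'" using FU(1) hF by simp
        show ?thesis
        proof (intro equalityI subsetI)
          fix x assume "x \<in> f ` (F \<inter> W)"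
          then have "Inl x \<in> Inl ` F' \<union> Inr ` U'" using e by blast
          then show "x \<in> F'" by blast
        next
          fix x assume "x \<in> F'"
          then have "Inl x \<in> Inl ` (f ` (F \<inter> W)) \<union> Inr ` (g ` (F \<inter> U))" using e by blast
          then show "x \<in> f ` (F \<inter> W)" by blast
        qed
      qed
      then show "F \<in> A" using ch F FU(2) by blast
    qed
  qed
qed

lemma D_fst: "fst (D m n) = Inl ` {0..m} \<union> Inr ` {0..n}"
  by (simp add: D_def alexander_dual_def disj_union_def simplex_def)

lemma D_face_iff:
  assumes S: "S \<subseteq> Inl ` {0..m} \<union> Inr ` {0..n}"
  shows "S \<in> snd (D m n) \<longleftrightarrow> \<not> Inl ` {0..m} \<subseteq> S \<and> \<not> Inr ` {0..n} \<subseteq> S"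
proof -
  let ?G = "Inl ` {0..m} \<union> Inr ` {0..n} :: (nat + nat) set"
  have sD: "snd (D m n) = {S. S \<subseteq> ?G \<and> ?G - S \<notin> {Inl ` F |F. F \<in> Pow {0..m}} \<union> {Inr ` G |G. G \<in> Pow {0..n}}}"
    by (simp add: D_def alexander_dual_def disj_union_def simplex_def)
  have A: "?G - S \<in> {Inl ` F |F. F \<in> Pow {0..m}} \<longleftrightarrow> Inr ` {0..n} \<subseteq> S"
  proof
    assume "?G - S \<in> {Inl ` F |F. F \<in> Pow {0..m}}"
    then obtain F where "?G - S = Inl ` F" by blast
    then show "Inr ` {0..n} \<subseteq> S" by blast
  next
    assume h: "Inr ` {0..n} \<subseteq> S"
    have "?G - S = Inl ` {x \<in> {0..m}. Inl x \<notin> S}"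
    proof (intro equalityI subsetI)
      fix y assume y: "y \<in> ?G - S"
      then obtain x where "x \<in> {0..m}" "y = Inl x" using h by blast
      then show "y \<in> Inl ` {x \<in> {0..m}. Inl x \<notin> S}" using y by blast
    qed blast
    then show "?G - S \<in> {Inl ` F |F. F \<in> Pow {0..m}}" by blast
  qed
  have B: "?G - S \<in> {Inr ` G |G. G \<in> Pow {0..n}} \<longleftrightarrow> Inl ` {0..m} \<subseteq> S"
  proof
    assume "?G - S \<in> {Inr ` G |G. G \<in> Pow {0..n}}"
    then obtain G where "?G - S = Inr ` G" by blast
    then show "Inl ` {0..m} \<subseteq> S" by blast
  next
    assume h: "Inl ` {0..m} \<subseteq> S"
    have "?G - S = Inr ` {x \<in> {0..n}. Inr x \<notin> S}"
    proof (intro equalityI subsetI)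
      fix y assume y: "y \<in> ?G - S"
      then obtain x where "x \<in> {0..n}" "y = Inr x" using h by blast
      then show "y \<in> Inr ` {x \<in> {0..n}. Inr x \<notin> S}" using y by blast
    qed blast
    then show "?G - S \<in> {Inr ` G |G. G \<in> Pow {0..n}}" by blast
  qed
  show ?thesis unfolding sD using S A B by blast
qed


theorem proposition4p5:
  fixes K :: "'a complex" and m n :: nat
  assumes "m \<ge> 1" and "n \<ge> 1"
    and "simplicial_complex K"
    and "beta_avoiding K"
    and "\<exists>W. W \<subseteq> fst K \<and> iso (induced K W) (D m n)"
  shows "\<exists>p. iso (induced K (non_ghost K)) (cone p (D m n))"
proof -
  define V where "V = fst K"
  define C where "C = snd K"
  have K: "K = (V, C)" unfolding V_def C_def by simp
  have bv: "bav V C" unfolding bav_def using assms(3,4) unfolding K simplicial_complex_def by auto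
  interpret b: bav V C by (rule bv)
  obtain W where W: "W \<subseteq> V" "iso (induced K W) (D m n)" using assms(5) unfolding V_def by blast
  let ?G = "Inl ` {0..m} \<union> Inr ` {0..n} :: (nat + nat) set"
  obtain f where f: "bij_betw f W ?G"
    and fF: "\<And>F. F \<subseteq> W \<Longrightarrow> (F \<in> {F \<in> C. F \<subseteq> W} \<longleftrightarrow> f ` F \<in> snd (D m n))"
    using W(2) unfolding iso_def induced_def D_fst C_def by auto
  have injf: "inj_on f W" and fW: "f ` W = ?G" using f by (simp_all add: bij_betw_def)
  define M where "M = {w \<in> W. f w \<in> Inl ` {0..m}}"
  define N where "N = {w \<in> W. f w \<in> Inr ` {0..n}}"
  have MN: "M \<inter> N = {}" unfolding M_def N_def by auto
  have MNW: "M \<union> N = W" using fW unfolding M_def N_def by auto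
  have fM: "f ` M = Inl ` {0..m}" unfolding M_def using fW by force
  have fN: "f ` N = Inr ` {0..n}" unfolding N_def using fW by force
  have MW: "M \<subseteq> W" "N \<subseteq> W" unfolding M_def N_def by auto
  have cM: "card M = Suc m"
  proof -
    have "card M = card (f ` M)" using card_image[OF inj_on_subset[OF injf MW(1)]] by simp
    also have "\<dots> = card {0..m}" unfolding fM by (rule card_image) simp
    finally show ?thesis by simp
  qed
  have cN: "card N = Suc n"
  proof -
    have "card N = card (f ` N)" using card_image[OF inj_on_subset[OF injf MW(2)]] by simp
    also have "\<dots> = card {0..n}" unfolding fN by (rule card_image) simp
    finally show ?thesis by simp
  qed
  have cM2: "2 \<le> card M" and cN2: "2 \<le> card N" using cM cN assms(1,2) by auto
  have finM: "finite M" and finN: "finite N" using cM cN card.infinite by force+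
  have face: "G \<in> C \<longleftrightarrow> \<not> M \<subseteq> G \<and> \<not> N \<subseteq> G" if G: "G \<subseteq> W" for G
  proof -
    have fG: "f ` G \<subseteq> ?G" using G fW by blast
    have "G \<in> C \<longleftrightarrow> f ` G \<in> snd (D m n)" using fF[OF G] G by blast
    also have "\<dots> \<longleftrightarrow> \<not> Inl ` {0..m} \<subseteq> f ` G \<and> \<not> Inr ` {0..n} \<subseteq> f ` G" by (rule D_face_iff[OF fG])
    also have "\<dots> \<longleftrightarrow> \<not> M \<subseteq> G \<and> \<not> N \<subseteq> G"
      unfolding fM[symmetric] fN[symmetric] using inj_sub[OF injf MW(1) G] inj_sub[OF injf MW(2) G] by simp
    finally show ?thesis .
  qed
  have r: "b.rel {} M N" unfolding b.rel_def
  proof (intro conjI allI impI)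
    show "{} \<in> C" using face[of "{}"] cM2 cN2 by auto
    show "M \<inter> N = {}" by fact
    show "(M \<union> N) \<inter> {} = {}" by simp
    show "M \<union> N \<subseteq> V" using MNW W(1) by simp
    fix G assume "G \<subseteq> M \<union> N"
    then show "G \<union> {} \<in> C \<longleftrightarrow> \<not> M \<subseteq> G \<and> \<not> N \<subseteq> G" using face MNW by simp
  qed
  define U where "U = non_ghost K - W"
  have UV: "U \<subseteq> V" unfolding U_def non_ghost_def V_def by auto
  have UW: "U \<inter> (M \<union> N) = {}" unfolding U_def MNW by blast
  have Ug: "\<forall>u\<in>U. {u} \<in> C" unfolding U_def non_ghost_def C_def by auto
  have finU: "finite U" using UV b.fin finite_subset by blast
  have Wng: "W \<subseteq> non_ghost K"
  proof
    fix w assume w: "w \<in> W"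
    have "\<not> M \<subseteq> {w}" "\<not> N \<subseteq> {w}" using b.two_not_sub[OF finM cM2] b.two_not_sub[OF finN cN2] by auto
    then have "{w} \<in> C" using face[of "{w}"] w by blast
    then show "w \<in> non_ghost K" using w W(1) unfolding non_ghost_def V_def C_def by blast
  qed
  have ng: "non_ghost K = W \<union> U" unfolding U_def using Wng by blast
  have WU: "W \<inter> U = {}" unfolding U_def by blast
  have ch: "\<forall>F. F \<subseteq> W \<union> U \<longrightarrow> (F \<in> {F \<in> C. F \<subseteq> W \<union> U} \<longleftrightarrow> f ` (F \<inter> W) \<in> snd (D m n))"
  proof (intro allI impI)
    fix F assume F: "F \<subseteq> W \<union> U"
    have FW: "F \<inter> W \<subseteq> W" by blast
    show "F \<in> {F \<in> C. F \<subseteq> W \<union> U} \<longleftrightarrow> f ` (F \<inter> W) \<in> snd (D m n)"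
    proof
      assume "F \<in> {F \<in> C. F \<subseteq> W \<union> U}"
      then have "F \<in> C" by blast
      then have "F \<inter> W \<in> C" by (rule b.dcI) blast
      then show "f ` (F \<inter> W) \<in> snd (D m n)" using fF[OF FW] by blast
    next
      assume "f ` (F \<inter> W) \<in> snd (D m n)"
      then have "F \<inter> W \<in> C" using fF[OF FW] by blast
      then have D: "\<not> M \<subseteq> F \<inter> W" "\<not> N \<subseteq> F \<inter> W" using face[OF FW] by auto
      have "\<forall>G. G \<subseteq> M \<union> N \<longrightarrow> \<not> M \<subseteq> G \<longrightarrow> \<not> N \<subseteq> G \<longrightarrow> G \<union> (F \<inter> U) \<in> C"
        by (rule b.claim[OF r cM2 cN2 UV UW Ug]) blast
      then have "(F \<inter> W) \<union> (F \<inter> U) \<in> C" using D MNW FW by simp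
      moreover have "(F \<inter> W) \<union> (F \<inter> U) = F" using F by blast
      ultimately show "F \<in> {F \<in> C. F \<subseteq> W \<union> U}" using F by simp
    qed
  qed
  have "induced K (non_ghost K) = (W \<union> U, {F \<in> C. F \<subseteq> W \<union> U})"
    unfolding induced_def ng C_def by simp
  moreover have "iso (W \<union> U, {F \<in> C. F \<subseteq> W \<union> U}) (cone (card U) (D m n))"
    by (rule final_iso[OF _ WU finU ch]) (use f in \<open>simp add: D_fst\<close>)
  ultimately show ?thesis by auto
qed

end
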